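(* Let $q$ be a distribution over $[n]$ and $x\in(0,1)$ with $\|q_{-x}\|_0>1$. Then there exists $i^*\in[n]$ such that, with $A=\{j\in[n]: q_j\le q_{i^*}\}$: (i) $\max_{j\in A}q_j=q_{i^*}$; (ii) $q(A)\ge x$; and (iii) $\dfrac{q(A)}{q_{i^*}}\ge\dfrac{\|q_{-x}\|_0-1}{\ln(1/x)}$.
   Context: For $x\ge0$, $q_{-x}$ is the vector obtained from $q$ by iteratively removing its smallest entries, stopping just before the total of the removed entries would exceed $x$. $\|v\|_0$ is the number of nonzero entries of $v$. $q(A)=\sum_{j\in A}q_j$. *)

theory Defs
  imports Complex_Main
begin

definition sorted_vals :: "(nat \<Rightarrow> real) \<Rightarrow> nat \<Rightarrow> real list" where
  "sorted_vals q n = sort (map q [1..<Suc n])"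

text \<open>Number of smallest entries removed when forming q_{-x}: remove entries in
  ascending order as long as the total removed does not exceed x.\<close>
definition num_removed :: "(nat \<Rightarrow> real) \<Rightarrow> nat \<Rightarrow> real \<Rightarrow> nat" where
  "num_removed q n x = Max {k. k \<le> n \<and> sum_list (take k (sorted_vals q n)) \<le> x}"

text \<open>The zero-norm of q_{-x}: number of nonzero entries that remain.\<close>
definition trunc_l0 :: "(nat \<Rightarrow> real) \<Rightarrow> nat \<Rightarrow> real \<Rightarrow> nat" where
  "trunc_l0 q n x = length (filter (\<lambda>v. v \<noteq> 0) (drop (num_removed q n x) (sorted_vals q n)))"

end

theory Submission imports Defs "HOL-Library.Multiset" begin

lemma core:
  fixes g :: "nat \<Rightarrow> real" and k n :: nat and x :: real
  assumes nn: "\<forall>i<n. g i \<ge> 0" and tot: "(\<Sum>i\<le>n-1. g i) = 1" and kn: "k+2 \<le> n"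
    and big: "\<forall>t. k \<le> t \<and> t < n \<longrightarrow> (\<Sum>i\<le>t. g i) > x"
    and pos: "\<forall>t. k \<le> t \<and> t < n \<longrightarrow> g t > 0"
    and x0: "0 < x" and x1: "x < 1"
  shows "\<exists>t. k \<le> t \<and> t < n \<and> (\<Sum>i\<le>t. g i) / g t \<ge> real (n-k-1) / ln (1/x)"
proof (rule ccontr)
  assume NT: "\<not> ?thesis"
  define L where "L = ln (1/x)"
  define d where "d = real (n-k-1)"
  have L0: "L > 0" using x0 x1 by (simp add: L_def)
  have d1: "d \<ge> 1" using kn by (simp add: d_def)
  have H: "L * (\<Sum>i\<le>t. g i) < d * g t" if "k \<le> t" "t < n" for t
  proof -
    have "(\<Sum>i\<le>t. g i) / g t < d / L" using NT that by (auto simp: d_def L_def)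
    then show ?thesis using pos that L0 by (simp add: field_simps)
  qed
  have gS: "g t \<le> (\<Sum>i\<le>t. g i)" if "t < n" for t
  proof -
    have "(\<Sum>i\<le>t. g i) = (\<Sum>i\<in>{..t}-{t}. g i) + g t"
      by (subst sum.remove[of _ t]) auto
    moreover have "(\<Sum>i\<in>{..t}-{t}. g i) \<ge> 0" using nn that by (intro sum_nonneg) auto
    ultimately show ?thesis by linarith
  qed
  have "L * (\<Sum>i\<le>k. g i) < d * (\<Sum>i\<le>k. g i)"
  proof -
    have "L * (\<Sum>i\<le>k. g i) < d * g k" using H[of k] kn by simp
    also have "\<dots> \<le> d * (\<Sum>i\<le>k. g i)" using gS[of k] kn d1 by (intro mult_left_mono) auto
    finally show ?thesis .
  qed
  moreover have Sk: "(\<Sum>i\<le>k. g i) > x" using big kn by simp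
  hence "(\<Sum>i\<le>k. g i) > 0" using x0 by simp
  ultimately have Ld: "L < d" by simp
  define r where "r = 1 - L / d"
  have r0: "r \<ge> 0" using Ld d1 by (simp add: r_def field_simps)
  have ind: "j \<le> n-k-1 \<Longrightarrow> (\<Sum>i\<le>n-1-j. g i) \<le> r ^ j" for j
  proof (induction j)
    case 0 then show ?case using tot by simp
  next
    case (Suc j)
    define u where "u = n - 1 - Suc j"
    have tu: "n - 1 - j = Suc u" using Suc.prems kn by (simp add: u_def)
    have IH: "(\<Sum>i\<le>Suc u. g i) \<le> r ^ j" using Suc tu by simp
    have "L * (\<Sum>i\<le>Suc u. g i) < d * g (Suc u)" using H[of "Suc u"] Suc.prems kn tu by simp
    then have "g (Suc u) > L / d * (\<Sum>i\<le>Suc u. g i)" using d1 by (simp add: field_simps)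
    then have "(\<Sum>i\<le>u. g i) < r * (\<Sum>i\<le>Suc u. g i)" by (simp add: r_def algebra_simps)
    also have "\<dots> \<le> r * r ^ j" using IH r0 by (rule mult_left_mono)
    finally show ?case by (simp add: u_def)
  qed
  have e: "n - 1 - (n-k-1) = k" using kn by simp
  have "(\<Sum>i\<le>k. g i) \<le> r ^ (n-k-1)" using ind[of "n-k-1"] unfolding e by simp
  also have "\<dots> \<le> exp (- L / d) ^ (n-k-1)"
    using r0 exp_ge_add_one_self[of "-L/d"] by (intro power_mono) (auto simp: r_def)
  also have "\<dots> = exp (- L)" using d1 by (simp add: exp_of_nat_mult[symmetric] d_def)
  also have "\<dots> = x" using x0 by (simp add: L_def ln_div)
  finally show False using Sk by simp
qed

lemma filter_sort_sum: "sum_list (filter P (sort xs)) = sum_list (filter P (xs::real list))"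
  by (metis mset_filter mset_sort sum_mset_sum_list)

lemma filter_map_sum:
  fixes q :: "nat \<Rightarrow> real"
  shows "sum_list (filter P (map q [1..<Suc n])) = (\<Sum>j\<in>{j\<in>{1..n}. P (q j)}. q j)"
proof -
  have "sum_list (filter P (map q [1..<Suc n])) = sum_list (map q (filter (P \<circ> q) [1..<Suc n]))"
    by (simp add: filter_map)
  also have "\<dots> = sum q (set (filter (P \<circ> q) [1..<Suc n]))"
    by (rule sum_list_distinct_conv_sum_set) simp
  also have "set (filter (P \<circ> q) [1..<Suc n]) = {j\<in>{1..n}. P (q j)}" by auto
  finally show ?thesis .
qed

lemma take_sum_nth:
  fixes s :: "real list"
  assumes "t < length s"
  shows "sum_list (take (Suc t) s) = (\<Sum>i\<le>t. s!i)"
proof -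
  have "sum_list (take (Suc t) s) = (\<Sum>i<length (take (Suc t) s). take (Suc t) s ! i)"
    by (simp add: sum_list_sum_nth atLeast0LessThan)
  also have "\<dots> = (\<Sum>i<Suc t. s ! i)" using assms by (intro sum.cong) auto
  finally show ?thesis by (simp add: lessThan_Suc_atMost)
qed

theorem lemmaC3:
  fixes q :: "nat \<Rightarrow> real" and n :: nat and x :: real
  assumes "\<forall>j\<in>{1..n}. q j \<ge> 0"
    and "(\<Sum>j\<in>{1..n}. q j) = 1"
    and "0 < x" and "x < 1"
    and "trunc_l0 q n x > 1"
  shows "\<exists>i\<in>{1..n}. (let A = {j\<in>{1..n}. q j \<le> q i} in
            Max (q ` A) = q i \<and> (\<Sum>j\<in>A. q j) \<ge> x \<and>
            (\<Sum>j\<in>A. q j) / q i \<ge> (real (trunc_l0 q n x) - 1) / ln (1 / x))"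
proof -
  define s where "s = sorted_vals q n"
  define k where "k = num_removed q n x"
  define m where "m = trunc_l0 q n x"
  have len: "length s = n" by (simp add: s_def sorted_vals_def)
  have srt: "sorted s" by (simp add: s_def sorted_vals_def)
  have sets: "set s = q ` {1..n}" by (auto simp: s_def sorted_vals_def)
  have nn: "\<forall>i<n. s!i \<ge> 0" using assms(1) sets len by (metis imageE nth_mem)
  have "sum_list s = sum_list (filter (\<lambda>_. True) (map q [1..<Suc n]))"
    using filter_sort_sum[of "\<lambda>_. True" "map q [1..<Suc n]"] by (simp add: s_def sorted_vals_def)
  also have "\<dots> = (\<Sum>j\<in>{j\<in>{1..n}. True}. q j)" by (rule filter_map_sum)
  also have "{j\<in>{1..n}. True} = {1..n}" by auto
  finally have sum1: "sum_list s = 1" using assms(2) by simp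
  define K where "K = {k. k \<le> n \<and> sum_list (take k s) \<le> x}"
  have finK: "finite K" by (rule finite_subset[of _ "{..n}"]) (auto simp: K_def)
  have "0 \<in> K" using assms(3) by (simp add: K_def)
  have kdef: "k = Max K" by (simp add: k_def num_removed_def K_def s_def)
  have kmax: "\<And>k'. k' \<in> K \<Longrightarrow> k' \<le> k"
    using finK by (simp add: kdef)
  have mle: "m \<le> n - k" using len
    by (simp add: m_def trunc_l0_def k_def[symmetric] s_def[symmetric] le_trans[OF length_filter_le])
  have kn: "k + 2 \<le> n" using mle assms(5) m_def by simp
  have big: "\<forall>t. k \<le> t \<and> t < n \<longrightarrow> (\<Sum>i\<le>t. s!i) > x"
  proof (intro allI impI)
    fix t assume t: "k \<le> t \<and> t < n"
    have "Suc t \<notin> K" using kmax[of "Suc t"] t by auto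
    thus "(\<Sum>i\<le>t. s!i) > x" using t take_sum_nth[of t s] len by (auto simp: K_def)
  qed
  have pos: "\<forall>t. k \<le> t \<and> t < n \<longrightarrow> s!t > 0"
  proof (intro allI impI)
    fix t assume t: "k \<le> t \<and> t < n"
    show "s!t > 0"
    proof (rule ccontr)
      assume "\<not> s!t > 0"
      hence "s!t = 0" using nn t by force
      hence "\<forall>i\<in>{..t}. s!i = 0" using nn t srt len
        by (metis atMost_iff le_less_trans order_antisym sorted_nth_mono)
      hence "(\<Sum>i\<le>t. s!i) = 0" by simp
      thus False using big t assms(3) by fastforce
    qed
  qed
  have tot: "(\<Sum>i\<le>n-1. s!i) = 1" using take_sum_nth[of "n-1" s] len kn sum1 by simp
  obtain t where t: "k \<le> t" "t < n" and rat: "(\<Sum>i\<le>t. s!i) / s!t \<ge> real (n-k-1) / ln (1/x)"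
    using core[of n "\<lambda>i. s!i" k x] nn tot kn big pos assms(3,4) by blast
  have "s!t \<in> q ` {1..n}" using sets t len by (metis nth_mem)
  then obtain i where i: "i \<in> {1..n}" "q i = s!t" by (metis imageE)
  define A where "A = {j\<in>{1..n}. q j \<le> q i}"
  have finA: "finite A" by (simp add: A_def)
  have iA: "i \<in> A" using i by (simp add: A_def)
  have Max: "Max (q ` A) = q i" using finA imageI[OF iA, of q] by (intro Max_eqI) (auto simp: A_def)
  have "sum_list (filter (\<lambda>v. v \<le> s!t) s) = sum_list (filter (\<lambda>v. v \<le> s!t) (map q [1..<Suc n]))"
    using filter_sort_sum[of "\<lambda>v. v \<le> s!t" "map q [1..<Suc n]"] by (simp add: s_def sorted_vals_def)
  also have "\<dots> = (\<Sum>j\<in>{j\<in>{1..n}. q j \<le> s!t}. q j)" by (rule filter_map_sum)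
  finally have sumA: "(\<Sum>j\<in>A. q j) = sum_list (filter (\<lambda>v. v \<le> s!t) s)" using i by (simp add: A_def)
  have "filter (\<lambda>v. v \<le> s!t) (take (Suc t) s) = take (Suc t) s"
  proof (rule filter_True, intro ballI)
    fix v assume "v \<in> set (take (Suc t) s)"
    then obtain j where "j < length (take (Suc t) s)" "v = take (Suc t) s ! j" by (metis in_set_conv_nth)
    thus "v \<le> s!t" using srt t len by (simp add: sorted_nth_mono)
  qed
  moreover have "sum_list (filter (\<lambda>v. v \<le> s!t) (drop (Suc t) s)) \<ge> 0"
    using nn len by (intro sum_list_nonneg) (auto simp: in_set_conv_nth)
  ultimately have "sum_list (filter (\<lambda>v. v \<le> s!t) s) \<ge> sum_list (take (Suc t) s)"
    by (metis append_take_drop_id filter_append sum_list_append le_add_same_cancel1)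
  hence ge: "(\<Sum>j\<in>A. q j) \<ge> (\<Sum>i\<le>t. s!i)" using sumA take_sum_nth[of t s] t len by simp
  have L0: "ln (1/x) > 0" using assms(3,4) by simp
  have "(real m - 1) / ln (1/x) \<le> real (n-k-1) / ln (1/x)"
    using mle kn L0 by (intro divide_right_mono) auto
  also have "\<dots> \<le> (\<Sum>i\<le>t. s!i) / s!t" by (rule rat)
  also have "\<dots> \<le> (\<Sum>j\<in>A. q j) / q i" proof -
    have "s!t > 0" using pos t by simp
    thus ?thesis using ge i(2) by (simp add: divide_right_mono)
  qed
  finally have "(real m - 1) / ln (1/x) \<le> (\<Sum>j\<in>A. q j) / q i" .
  moreover have "(\<Sum>j\<in>A. q j) \<ge> x" using ge big t by force
  ultimately show ?thesis using i Max unfolding Let_def A_def m_def by blast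
qed

end
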